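(* Assume (A1), (A2), (A3) (see context). Suppose there exist a locally bounded measurable $\phi:\mathbb R_+\to\mathbb R_+$ and constants $C_0,\varepsilon>0$ such that $\phi(r)\le C_0r^{-d-2-\varepsilon}$ for $r\ge1$, and for $\mathcal P_0$-a.a. $\omega$, $\mathrm E_0[c_{0,x}(\omega)\mid\hat\omega]\le\phi(|x|)$ for all $x\in\hat\omega$ with $x\sim0$. If $\rho_2<+\infty$, then $\lambda_0,\lambda_2\in L^1(\mathcal P_0)$.
   Context: $\mathcal N$ = locally finite subsets of $\mathbb R^d$, identified with counting measures ($\xi(A)=\#(\xi\cap A)$), with $\sigma$-algebra generated by $\xi\mapsto\xi(A)$; $\tau_x\xi:=\xi-x$. $\mathrm{Vor}(x|\xi)=\{y:|y-x|\le|y-z|\ \forall z\in\xi\}$; $\mathrm{DT}(\xi)$ is the graph on $\xi$ with edges $\{x,y\}$, $x\ne y$, whose Voronoi cells share a $(d-1)$-dimensional face; $x\sim y$ denotes adjacency. Setting: $(\Omega,\mathcal F,\mathcal P)$ probability space with a measurable $\mathbb R^d$-action $(\theta_x)$; simple point process $\omega\mapsto\hat\omega\in\mathcal N$ with law $\mathbb P$ (expectation $\mathbb E$); measurable symmetric conductances $c_{x,y}(\omega)\ge0$ with $c_{x,x}=0$ and $c_{x,y}(\omega)=0$ unless $\{x,y\}$ is an edge of $\mathrm{DT}(\hat\omega)$. (A1) $\mathcal P$ is $\theta$-invariant and $\mathcal P(\hat\omega=\emptyset)=0$; (A2) $m:=\mathbb E[\xi([0,1]^d)]\in(0,\infty)$;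 (A3) on a $\theta$-invariant measurable set $\Omega_*$ of full measure, $\widehat{\theta_x\omega}=\tau_x\hat\omega$ and $c_{y-x,z-x}(\theta_x\omega)=c_{y,z}(\omega)$ for all $x$ and edges $\{y,z\}$ of $\mathrm{DT}(\hat\omega)$. Palm distribution $\mathcal P_0(A)=\frac1m\int d\mathcal P(\omega)\sum_{x\in\hat\omega\cap[0,1]^d}\mathbf 1_A(\theta_x\omega)$, concentrated on $\{0\in\hat\omega\}$, expectation $\mathrm E_0$. $\lambda_k(\omega):=\sum_{x\in\hat\omega:x\sim0}c_{0,x}(\omega)|x|^k$ for $k=0,2$. $\rho_2:=\mathbb E[\xi([0,1]^d)^2]$. *)

theory Defs
  imports "HOL-Probability.Probability"
begin

text \<open>Locally finite subsets of R^d (simple counting measures).\<close>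
definition loc_finite_sets :: "('a::euclidean_space) set set" where
  "loc_finite_sets = {\<xi>. \<forall>K. compact K \<longrightarrow> finite (\<xi> \<inter> K)}"

definition Nspace :: "('a::euclidean_space) set measure" where
  "Nspace = sigma loc_finite_sets
     {{\<xi> \<in> loc_finite_sets. card (\<xi> \<inter> A) = k} | A k. A \<in> sets borel \<and> bounded A}"

definition Vor :: "'a::euclidean_space \<Rightarrow> 'a set \<Rightarrow> 'a set" where
  "Vor x \<xi> = {y. \<forall>z\<in>\<xi>. dist y x \<le> dist y z}"

text \<open>Adjacency in the Delaunay triangulation DT(xi): distinct points of xi
  whose Voronoi cells share a (d-1)-dimensional face.\<close>
definition dt_adj :: "'a::euclidean_space set \<Rightarrow> 'a \<Rightarrow> 'a \<Rightarrow> bool" where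
  "dt_adj \<xi> x y \<longleftrightarrow> x \<in> \<xi> \<and> y \<in> \<xi> \<and> x \<noteq> y \<and>
      aff_dim (Vor x \<xi> \<inter> Vor y \<xi>) = int DIM('a) - 1"

definition measurable_action :: "'w measure \<Rightarrow> ('a::euclidean_space \<Rightarrow> 'w \<Rightarrow> 'w) \<Rightarrow> bool" where
  "measurable_action P \<theta> \<longleftrightarrow>
     (\<lambda>(x, \<omega>). \<theta> x \<omega>) \<in> measurable (borel \<Otimes>\<^sub>M P) P \<and>
     (\<forall>\<omega>\<in>space P. \<theta> 0 \<omega> = \<omega>) \<and>
     (\<forall>x y. \<forall>\<omega>\<in>space P. \<theta> (x + y) \<omega> = \<theta> x (\<theta> y \<omega>))"

definition intensity :: "'w measure \<Rightarrow> ('w \<Rightarrow> 'a::euclidean_space set) \<Rightarrow> ennreal" where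
  "intensity P pp = (\<integral>\<^sup>+ \<omega>. of_nat (card (pp \<omega> \<inter> cbox 0 One)) \<partial>P)"

definition second_moment :: "'w measure \<Rightarrow> ('w \<Rightarrow> 'a::euclidean_space set) \<Rightarrow> ennreal" where
  "second_moment P pp = (\<integral>\<^sup>+ \<omega>. of_nat (card (pp \<omega> \<inter> cbox 0 One)) ^ 2 \<partial>P)"

definition palm :: "'w measure \<Rightarrow> ('a::euclidean_space \<Rightarrow> 'w \<Rightarrow> 'w) \<Rightarrow> ('w \<Rightarrow> 'a set) \<Rightarrow> 'w measure" where
  "palm P \<theta> pp = measure_of (space P) (sets P)
     (\<lambda>A. (\<integral>\<^sup>+ \<omega>. of_nat (card {x \<in> pp \<omega> \<inter> cbox 0 One. \<theta> x \<omega> \<in> A}) \<partial>P) / intensity P pp)"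

definition lam :: "('w \<Rightarrow> 'a::euclidean_space \<Rightarrow> 'a \<Rightarrow> real) \<Rightarrow> ('w \<Rightarrow> 'a set) \<Rightarrow> nat \<Rightarrow> 'w \<Rightarrow> ennreal" where
  "lam c pp k \<omega> = (\<integral>\<^sup>+ x. ennreal (c \<omega> 0 x * norm x ^ k) \<partial>count_space {x \<in> pp \<omega>. dt_adj (pp \<omega>) 0 x})"

text \<open>g(xi, x) is a version of the conditional expectation E_0[c_{0,x} | omega-hat] at the
  neighbours x of 0: g is measurable in (xi, x) and, for every nonnegative measurable test
  function h of (omega-hat, x),
  E_0[sum_{x~0} c_{0,x} h(omega-hat,x)] = E_0[sum_{x~0} g(omega-hat,x) h(omega-hat,x)].\<close>
definition cond_exp_neighbours ::
  "'w measure \<Rightarrow> ('w \<Rightarrow> 'a::euclidean_space set) \<Rightarrow> ('w \<Rightarrow> 'a \<Rightarrow> 'a \<Rightarrow> real)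
     \<Rightarrow> ('a set \<times> 'a \<Rightarrow> ennreal) \<Rightarrow> bool" where
  "cond_exp_neighbours Q pp c g \<longleftrightarrow>
     g \<in> borel_measurable (Nspace \<Otimes>\<^sub>M borel) \<and>
     (\<forall>h \<in> borel_measurable (Nspace \<Otimes>\<^sub>M borel).
        (\<integral>\<^sup>+ \<omega>. (\<integral>\<^sup>+ x. ennreal (c \<omega> 0 x) * h (pp \<omega>, x)
                    \<partial>count_space {x \<in> pp \<omega>. dt_adj (pp \<omega>) 0 x}) \<partial>Q)
      = (\<integral>\<^sup>+ \<omega>. (\<integral>\<^sup>+ x. g (pp \<omega>, x) * h (pp \<omega>, x)
                    \<partial>count_space {x \<in> pp \<omega>. dt_adj (pp \<omega>) 0 x}) \<partial>Q))"

end

theory Submission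
  imports Defs
begin


lemma Nspace_gen_sub:
  "{{\<xi> \<in> loc_finite_sets. card (\<xi> \<inter> A) = k} | A k. A \<in> sets borel \<and> bounded A} \<subseteq> Pow (loc_finite_sets :: ('a::euclidean_space) set set)"
  by auto

lemma space_Nspace: "space (Nspace :: ('a::euclidean_space) set measure) = loc_finite_sets"
  unfolding Nspace_def using Nspace_gen_sub by (rule space_measure_of)

lemma sets_Nspace: "sets (Nspace :: ('a::euclidean_space) set measure) =
   sigma_sets loc_finite_sets {{\<xi> \<in> loc_finite_sets. card (\<xi> \<inter> A) = k} | A k. A \<in> sets borel \<and> bounded A}"
  unfolding Nspace_def using Nspace_gen_sub by (rule sets_measure_of)

lemma lf_finite: "\<xi> \<in> loc_finite_sets \<Longrightarrow> bounded A \<Longrightarrow> finite (\<xi> \<inter> A)"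
proof -
  assume "\<xi> \<in> loc_finite_sets" "bounded A"
  then have "finite (\<xi> \<inter> closure A)" unfolding loc_finite_sets_def
    using compact_closure by blast
  then show ?thesis by (rule finite_subset[rotated]) (use closure_subset in auto)
qed

lemma pp_lf: "pp \<in> measurable P Nspace \<Longrightarrow> \<omega> \<in> space P \<Longrightarrow> pp \<omega> \<in> loc_finite_sets"
  using measurable_space[of pp P Nspace \<omega>] by (simp add: space_Nspace)

lemma card_meas:
  fixes pp :: "'w \<Rightarrow> 'a::euclidean_space set"
  assumes pp: "pp \<in> measurable P Nspace" and A: "A \<in> sets borel" "bounded A"
  shows "(\<lambda>\<omega>. card (pp \<omega> \<inter> A)) \<in> measurable P (count_space UNIV)"
  unfolding measurable_count_space_eq2_countable
proof (intro conjI ballI)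
  fix k :: nat
  have "{\<xi> \<in> loc_finite_sets. card (\<xi> \<inter> A) = k} \<in> sets Nspace"
    unfolding sets_Nspace using A by (intro sigma_sets.Basic) blast
  from measurable_sets[OF pp this]
  have "pp -` {\<xi> \<in> loc_finite_sets. card (\<xi> \<inter> A) = k} \<inter> space P \<in> sets P" .
  also have "pp -` {\<xi> \<in> loc_finite_sets. card (\<xi> \<inter> A) = k} \<inter> space P
     = (\<lambda>\<omega>. card (pp \<omega> \<inter> A)) -` {k} \<inter> space P"
    using pp_lf[OF pp] by auto
  finally show "(\<lambda>\<omega>. card (pp \<omega> \<inter> A)) -` {k} \<inter> space P \<in> sets P" .
qed auto

lemma card_cnt_meas:
  fixes pp :: "'w \<Rightarrow> 'a::euclidean_space set"
  assumes pp: "pp \<in> measurable P Nspace" and A: "A \<in> sets borel" "bounded A"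
  shows "(\<lambda>\<omega>. of_nat (card (pp \<omega> \<inter> A)) :: ennreal) \<in> borel_measurable P"
  by (rule measurable_compose[OF card_meas[OF assms]]) simp


lemma count_set_meas_n:
  fixes pp :: "'w \<Rightarrow> 'a::euclidean_space set"
  assumes pp: "pp \<in> measurable P Nspace" and S: "S \<in> sets (P \<Otimes>\<^sub>M borel)"
  shows "(\<lambda>\<omega>. emeasure (count_space UNIV) {x \<in> pp \<omega> \<inter> cball 0 r. (\<omega>,x) \<in> S}) \<in> borel_measurable P"
  using Int_stable_pair_measure_generator pair_measure_closed S unfolding sets_pair_measure
proof (induct rule: sigma_sets_induct_disjoint)
  case (basic A)
  then obtain a b where ab: "A = a \<times> b" "a \<in> sets P" "b \<in> sets borel" by auto
  have fin: "\<omega> \<in> space P \<Longrightarrow> finite (pp \<omega> \<inter> (cball 0 r \<inter> b))" for \<omega>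
    by (intro lf_finite pp_lf[OF pp]) auto
  have eq: "emeasure (count_space UNIV) {x \<in> pp \<omega> \<inter> cball 0 r. (\<omega>,x) \<in> A}
     = indicator a \<omega> * of_nat (card (pp \<omega> \<inter> (cball 0 r \<inter> b)))" if "\<omega> \<in> space P" for \<omega>
  proof (cases "\<omega> \<in> a")
    case True
    then have "{x \<in> pp \<omega> \<inter> cball 0 r. (\<omega>,x) \<in> A} = pp \<omega> \<inter> (cball 0 r \<inter> b)"
      using ab by auto
    then show ?thesis using True fin[OF that] by simp
  next
    case False
    then have e: "{x \<in> pp \<omega> \<inter> cball 0 r. (\<omega>,x) \<in> A} = {}" using ab by auto
    show ?thesis by (subst e) (simp add: False)
  qed
  have m: "(\<lambda>\<omega>. of_nat (card (pp \<omega> \<inter> (cball 0 r \<inter> b))) :: ennreal) \<in> borel_measurable P"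
    by (rule card_cnt_meas[OF pp]) (use ab in auto)
  have "(\<lambda>\<omega>. indicator a \<omega> * of_nat (card (pp \<omega> \<inter> (cball 0 r \<inter> b))) :: ennreal) \<in> borel_measurable P"
    using m ab by measurable
  then show ?case by (rule measurable_cong[THEN iffD1, rotated]) (erule eq[symmetric])
next
  case empty
  then show ?case by simp
next
  case (compl A)
  have fin: "\<omega> \<in> space P \<Longrightarrow> finite (pp \<omega> \<inter> cball 0 r)" for \<omega>
    by (intro lf_finite pp_lf[OF pp]) auto
  have eq: "emeasure (count_space UNIV) {x \<in> pp \<omega> \<inter> cball 0 r. (\<omega>,x) \<in> space P \<times> space borel - A}
     = of_nat (card (pp \<omega> \<inter> cball 0 r)) - emeasure (count_space UNIV) {x \<in> pp \<omega> \<inter> cball 0 r. (\<omega>,x) \<in> A}"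
    if "\<omega> \<in> space P" for \<omega>
  proof -
    define F where "F = pp \<omega> \<inter> cball 0 r"
    define T where "T = {x \<in> pp \<omega> \<inter> cball 0 r. (\<omega>,x) \<in> A}"
    have e1: "{x \<in> pp \<omega> \<inter> cball 0 r. (\<omega>,x) \<in> space P \<times> space borel - A} = F - T"
      using that unfolding F_def T_def by auto
    have finT: "finite T"
      using fin[OF that] unfolding T_def by (rule finite_subset[rotated]) auto
    have "emeasure (count_space UNIV) (F - T) = emeasure (count_space UNIV) F - emeasure (count_space UNIV) T"
      by (rule emeasure_Diff) (use finT in \<open>auto simp: F_def T_def\<close>)
    moreover have "emeasure (count_space UNIV) F = of_nat (card F)" using fin[OF that] F_def by simp
    ultimately show ?thesis unfolding e1 by (simp only: F_def T_def)
  qed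
  have m: "(\<lambda>\<omega>. of_nat (card (pp \<omega> \<inter> cball 0 r)) :: ennreal) \<in> borel_measurable P"
    by (rule card_cnt_meas[OF pp]) auto
  have "(\<lambda>\<omega>. of_nat (card (pp \<omega> \<inter> cball 0 r)) - emeasure (count_space UNIV) {x \<in> pp \<omega> \<inter> cball 0 r. (\<omega>,x) \<in> A}) \<in> borel_measurable P"
    using m compl(2) by (rule borel_measurable_minus_ennreal)
  then show ?case by (rule measurable_cong[THEN iffD1, rotated]) (erule eq[symmetric])
next
  case (union A)
  have eq: "emeasure (count_space UNIV) {x \<in> pp \<omega> \<inter> cball 0 r. (\<omega>,x) \<in> (\<Union>i. A i)}
     = (\<Sum>i. emeasure (count_space UNIV) {x \<in> pp \<omega> \<inter> cball 0 r. (\<omega>,x) \<in> A i})" for \<omega>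
  proof -
    have "{x \<in> pp \<omega> \<inter> cball 0 r. (\<omega>,x) \<in> (\<Union>i. A i)} = (\<Union>i. {x \<in> pp \<omega> \<inter> cball 0 r. (\<omega>,x) \<in> A i})"
      by auto
    moreover have "disjoint_family (\<lambda>i. {x \<in> pp \<omega> \<inter> cball 0 r. (\<omega>,x) \<in> A i})"
      using union(1) unfolding disjoint_family_on_def by auto
    ultimately show ?thesis by (simp add: suminf_emeasure)
  qed
  have "(\<lambda>\<omega>. \<Sum>i. emeasure (count_space UNIV) {x \<in> pp \<omega> \<inter> cball 0 r. (\<omega>,x) \<in> A i}) \<in> borel_measurable P"
    using union(3) by (rule borel_measurable_suminf_order)
  then show ?case by (simp only: eq)
qed

lemma count_set_meas:
  fixes pp :: "'w \<Rightarrow> 'a::euclidean_space set"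
  assumes pp: "pp \<in> measurable P Nspace" and S: "S \<in> sets (P \<Otimes>\<^sub>M borel)"
  shows "(\<lambda>\<omega>. emeasure (count_space UNIV) {x \<in> pp \<omega>. (\<omega>,x) \<in> S}) \<in> borel_measurable P"
proof -
  have eq: "emeasure (count_space UNIV) {x \<in> pp \<omega>. (\<omega>,x) \<in> S}
      = (SUP n. emeasure (count_space UNIV) {x \<in> pp \<omega> \<inter> cball 0 (real n). (\<omega>,x) \<in> S})" for \<omega>
  proof -
    have e1: "{x \<in> pp \<omega>. (\<omega>,x) \<in> S} = (\<Union>n. {x \<in> pp \<omega> \<inter> cball 0 (real n). (\<omega>,x) \<in> S})"
      by (auto simp: real_arch_simple)
    have inc: "incseq (\<lambda>n. {x \<in> pp \<omega> \<inter> cball 0 (real n). (\<omega>,x) \<in> S})"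
      by (auto simp: incseq_def)
    have e2: "(SUP n. emeasure (count_space UNIV) {x \<in> pp \<omega> \<inter> cball 0 (real n). (\<omega>,x) \<in> S})
       = emeasure (count_space UNIV) (\<Union>n. {x \<in> pp \<omega> \<inter> cball 0 (real n). (\<omega>,x) \<in> S})"
      by (rule SUP_emeasure_incseq[OF _ inc]) (simp add: sets_count_space)
    show ?thesis unfolding e2 e1[symmetric] ..
  qed
  show ?thesis unfolding eq
    by (intro borel_measurable_SUP count_set_meas_n[OF pp S]) simp
qed


lemma count_int_meas:
  fixes pp :: "'w \<Rightarrow> 'a::euclidean_space set"
  assumes pp: "pp \<in> measurable P Nspace" and F: "F \<in> borel_measurable (P \<Otimes>\<^sub>M borel)"
  shows "(\<lambda>\<omega>. \<integral>\<^sup>+x. F (\<omega>,x) \<partial>count_space (pp \<omega>)) \<in> borel_measurable P"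
  using F
proof (induct rule: borel_measurable_induct)
  case (cong f g)
  have "\<And>\<omega>. \<omega> \<in> space P \<Longrightarrow> (\<integral>\<^sup>+x. g (\<omega>,x) \<partial>count_space (pp \<omega>)) = (\<integral>\<^sup>+x. f (\<omega>,x) \<partial>count_space (pp \<omega>))"
    using cong(3) by (intro nn_integral_cong) (simp add: space_pair_measure)
  with cong(4) show ?case by (rule measurable_cong[THEN iffD1, rotated])
next
  case (set A)
  have eq: "(\<integral>\<^sup>+x. indicator A (\<omega>,x) \<partial>count_space (pp \<omega>)) = emeasure (count_space UNIV) {x \<in> pp \<omega>. (\<omega>,x) \<in> A}" for \<omega>
  proof -
    have "(\<integral>\<^sup>+x. indicator A (\<omega>,x) \<partial>count_space (pp \<omega>)) = (\<integral>\<^sup>+x. indicator A (\<omega>,x) * indicator (pp \<omega>) x \<partial>count_space UNIV)"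
      by (rule nn_integral_count_space_indicator) simp
    also have "\<dots> = (\<integral>\<^sup>+x. indicator {x \<in> pp \<omega>. (\<omega>,x) \<in> A} x \<partial>count_space UNIV)"
      by (intro nn_integral_cong) (auto simp: indicator_def)
    also have "\<dots> = emeasure (count_space UNIV) {x \<in> pp \<omega>. (\<omega>,x) \<in> A}"
      by (rule nn_integral_indicator) simp
    finally show ?thesis .
  qed
  show ?case unfolding eq by (rule count_set_meas[OF pp set])
next
  case (mult u c)
  have eq: "(\<integral>\<^sup>+x. c * u (\<omega>,x) \<partial>count_space (pp \<omega>)) = c * (\<integral>\<^sup>+x. u (\<omega>,x) \<partial>count_space (pp \<omega>))" for \<omega>
    by (rule nn_integral_cmult) simp
  show ?case unfolding eq using mult(4) by measurable
next
  case (add u v)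
  have eq: "(\<integral>\<^sup>+x. v (\<omega>,x) + u (\<omega>,x) \<partial>count_space (pp \<omega>)) = (\<integral>\<^sup>+x. v (\<omega>,x) \<partial>count_space (pp \<omega>)) + (\<integral>\<^sup>+x. u (\<omega>,x) \<partial>count_space (pp \<omega>))" for \<omega>
    by (rule nn_integral_add) simp_all
  show ?case unfolding eq using add(3,7) by measurable
next
  case (seq U)
  have eq: "(\<integral>\<^sup>+x. (SUP i. U i) (\<omega>,x) \<partial>count_space (pp \<omega>)) = (SUP i. \<integral>\<^sup>+x. U i (\<omega>,x) \<partial>count_space (pp \<omega>))" for \<omega>
  proof -
    have "incseq (\<lambda>i x. U i (\<omega>,x))" using seq(4) by (auto simp: incseq_def le_fun_def)
    then show ?thesis unfolding SUP_apply by (rule nn_integral_monotone_convergence_SUP) simp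
  qed
  show ?case unfolding eq using seq(3) by (intro borel_measurable_SUP) simp_all
qed


locale palm_setup =
  fixes P :: "'w measure" and \<theta> :: "'a::euclidean_space \<Rightarrow> 'w \<Rightarrow> 'w" and pp :: "'w \<Rightarrow> 'a set"
  assumes action: "measurable_action P \<theta>"
    and pp_meas: "pp \<in> measurable P Nspace"
    and m_pos: "0 < intensity P pp" and m_fin: "intensity P pp < \<infinity>"
begin

definition Tf :: "('w \<Rightarrow> ennreal) \<Rightarrow> 'w \<Rightarrow> ennreal" where
  "Tf f \<omega> = (\<integral>\<^sup>+x. indicator (cbox 0 One) x * f (\<theta> x \<omega>) \<partial>count_space (pp \<omega>))"

definition Psi :: "'w set \<Rightarrow> ennreal" where
  "Psi = (\<lambda>A. (\<integral>\<^sup>+ \<omega>. of_nat (card {x \<in> pp \<omega> \<inter> cbox 0 One. \<theta> x \<omega> \<in> A}) \<partial>P) / intensity P pp)"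

lemma th_meas: "(\<lambda>p. \<theta> (snd p) (fst p)) \<in> measurable (P \<Otimes>\<^sub>M borel) P"
proof -
  have "(\<lambda>(x, \<omega>). \<theta> x \<omega>) \<in> measurable (borel \<Otimes>\<^sub>M P) P"
    using action unfolding measurable_action_def by blast
  moreover have "(\<lambda>p. (snd p, fst p)) \<in> measurable (P \<Otimes>\<^sub>M borel) (borel \<Otimes>\<^sub>M P)"
    by measurable
  ultimately have "(\<lambda>p. (\<lambda>(x, \<omega>). \<theta> x \<omega>) (snd p, fst p)) \<in> measurable (P \<Otimes>\<^sub>M borel) P"
    by (rule measurable_compose[rotated])
  then show ?thesis by simp
qed

lemma th_space: "\<omega> \<in> space P \<Longrightarrow> \<theta> x \<omega> \<in> space P"
  using measurable_space[OF th_meas, of "(\<omega>, x)"] by (simp add: space_pair_measure)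

lemma Tf_meas: "f \<in> borel_measurable P \<Longrightarrow> Tf f \<in> borel_measurable P"
proof -
  assume f: "f \<in> borel_measurable P"
  have "(\<lambda>p. indicator (cbox 0 One) (snd p) * f (\<theta> (snd p) (fst p))) \<in> borel_measurable (P \<Otimes>\<^sub>M borel)"
    using measurable_compose[OF th_meas f] by measurable
  from count_int_meas[OF pp_meas this] show ?thesis
    unfolding Tf_def by simp
qed

lemma card_eq: "\<omega> \<in> space P \<Longrightarrow> of_nat (card {x \<in> pp \<omega> \<inter> cbox 0 One. \<theta> x \<omega> \<in> A}) = Tf (indicator A) \<omega>"
proof -
  assume \<omega>: "\<omega> \<in> space P"
  have fin: "finite {x \<in> pp \<omega> \<inter> cbox 0 One. \<theta> x \<omega> \<in> A}"
    using lf_finite[OF pp_lf[OF pp_meas \<omega>], of "cbox 0 One"] by (rule finite_subset[rotated]) auto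
  have "Tf (indicator A) \<omega> = (\<integral>\<^sup>+x. indicator (cbox 0 One) x * indicator A (\<theta> x \<omega>) * indicator (pp \<omega>) x \<partial>count_space UNIV)"
    unfolding Tf_def by (rule nn_integral_count_space_indicator) simp
  also have "\<dots> = (\<integral>\<^sup>+x. indicator {x \<in> pp \<omega> \<inter> cbox 0 One. \<theta> x \<omega> \<in> A} x \<partial>count_space UNIV)"
    by (intro nn_integral_cong) (auto simp: indicator_def)
  also have "\<dots> = of_nat (card {x \<in> pp \<omega> \<inter> cbox 0 One. \<theta> x \<omega> \<in> A})"
    using fin by simp
  finally show ?thesis by simp
qed

lemma Psi_eq: "Psi A = (\<integral>\<^sup>+ \<omega>. Tf (indicator A) \<omega> \<partial>P) / intensity P pp"
proof -
  have "(\<integral>\<^sup>+ \<omega>. of_nat (card {x \<in> pp \<omega> \<inter> cbox 0 One. \<theta> x \<omega> \<in> A}) \<partial>P) = (\<integral>\<^sup>+ \<omega>. Tf (indicator A) \<omega> \<partial>P)"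
    by (rule nn_integral_cong) (rule card_eq)
  then show ?thesis unfolding Psi_def by simp
qed

lemma Tf_cong: "\<omega> \<in> space P \<Longrightarrow> (\<And>w. w \<in> space P \<Longrightarrow> f w = g w) \<Longrightarrow> Tf f \<omega> = Tf g \<omega>"
  unfolding Tf_def by (intro nn_integral_cong) (simp add: th_space)

lemma emeasure_palm: "A \<in> sets P \<Longrightarrow> emeasure (palm P \<theta> pp) A = Psi A"
  unfolding palm_def Psi_def[symmetric]
proof (rule emeasure_measure_of_sigma)
  show "sigma_algebra (space P) (sets P)" by (rule sets.sigma_algebra_axioms)
  show "positive (sets P) Psi" unfolding positive_def Psi_def by simp
  show "countably_additive (sets P) Psi" unfolding countably_additive_def
  proof (intro allI impI)
    fix A :: "nat \<Rightarrow> 'w set"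
    assume A: "range A \<subseteq> sets P" "disjoint_family A" "\<Union> (range A) \<in> sets P"
    have "Tf (indicator (\<Union>i. A i)) \<omega> = (\<Sum>i. Tf (indicator (A i)) \<omega>)" for \<omega>
    proof -
      have "Tf (indicator (\<Union>i. A i)) \<omega> = (\<integral>\<^sup>+x. (\<Sum>i. indicator (cbox 0 One) x * indicator (A i) (\<theta> x \<omega>)) \<partial>count_space (pp \<omega>))"
        unfolding Tf_def suminf_indicator[OF A(2), symmetric] by simp
      also have "\<dots> = (\<Sum>i. Tf (indicator (A i)) \<omega>)"
        unfolding Tf_def by (rule nn_integral_suminf) simp
      finally show ?thesis .
    qed
    then have "(\<integral>\<^sup>+ \<omega>. Tf (indicator (\<Union>i. A i)) \<omega> \<partial>P) = (\<Sum>i. \<integral>\<^sup>+ \<omega>. Tf (indicator (A i)) \<omega> \<partial>P)"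
      using A(1) by (simp, intro nn_integral_suminf Tf_meas) auto
    then show "(\<Sum>i. Psi (A i)) = Psi (\<Union> (range A))"
      unfolding Psi_eq by simp
  qed
  show "A \<in> sets P" if "A \<in> sets P" using that .
qed

lemma sets_palm[measurable_cong]: "sets (palm P \<theta> pp) = sets P"
  unfolding palm_def by (simp add: sets.sets_into_space)

lemma space_palm: "space (palm P \<theta> pp) = space P"
  unfolding palm_def by (simp add: sets.sets_into_space)

lemma palm_int:
  assumes f: "f \<in> borel_measurable P"
  shows "(\<integral>\<^sup>+ \<omega>. f \<omega> \<partial>palm P \<theta> pp) = (\<integral>\<^sup>+ \<omega>. Tf f \<omega> \<partial>P) / intensity P pp"
  using f
proof (induct rule: borel_measurable_induct)
  case (cong f g)
  have "(\<integral>\<^sup>+ \<omega>. f \<omega> \<partial>palm P \<theta> pp) = (\<integral>\<^sup>+ \<omega>. g \<omega> \<partial>palm P \<theta> pp)"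
    using cong(3) by (intro nn_integral_cong) (simp add: space_palm)
  moreover have "(\<integral>\<^sup>+ \<omega>. Tf f \<omega> \<partial>P) = (\<integral>\<^sup>+ \<omega>. Tf g \<omega> \<partial>P)"
    using cong(3) by (intro nn_integral_cong Tf_cong) auto
  ultimately show ?case using cong(4) by simp
next
  case (set A)
  then show ?case
    by (simp add: emeasure_palm Psi_eq sets_palm)
next
  case (mult u c)
  have "(\<integral>\<^sup>+ \<omega>. c * u \<omega> \<partial>palm P \<theta> pp) = c * (\<integral>\<^sup>+ \<omega>. u \<omega> \<partial>palm P \<theta> pp)"
    using mult(2) by (intro nn_integral_cmult) (simp add: measurable_cong_sets[OF sets_palm refl])
  moreover have "Tf (\<lambda>x. c * u x) \<omega> = c * Tf u \<omega>" for \<omega>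
    unfolding Tf_def by (subst nn_integral_cmult[symmetric]) (simp_all add: ac_simps)
  moreover have "(\<integral>\<^sup>+ \<omega>. c * Tf u \<omega> \<partial>P) = c * (\<integral>\<^sup>+ \<omega>. Tf u \<omega> \<partial>P)"
    by (intro nn_integral_cmult Tf_meas mult(2))
  ultimately show ?case using mult(4) by (simp add: ennreal_times_divide)
next
  case (add u v)
  have "(\<integral>\<^sup>+ \<omega>. v \<omega> + u \<omega> \<partial>palm P \<theta> pp) = (\<integral>\<^sup>+ \<omega>. v \<omega> \<partial>palm P \<theta> pp) + (\<integral>\<^sup>+ \<omega>. u \<omega> \<partial>palm P \<theta> pp)"
    using add(1,4) by (intro nn_integral_add) (simp_all add: measurable_cong_sets[OF sets_palm refl])
  moreover have "Tf (\<lambda>x. v x + u x) \<omega> = Tf v \<omega> + Tf u \<omega>" for \<omega>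
    unfolding Tf_def by (subst nn_integral_add[symmetric]) (simp_all add: distrib_left)
  moreover have "(\<integral>\<^sup>+ \<omega>. Tf v \<omega> + Tf u \<omega> \<partial>P) = (\<integral>\<^sup>+ \<omega>. Tf v \<omega> \<partial>P) + (\<integral>\<^sup>+ \<omega>. Tf u \<omega> \<partial>P)"
    by (intro nn_integral_add Tf_meas add(1,4))
  ultimately show ?case using add(3,7) by (simp add: add_divide_distrib_ennreal)
next
  case (seq U)
  have e1: "(\<integral>\<^sup>+ \<omega>. (SUP i. U i) \<omega> \<partial>palm P \<theta> pp) = (SUP i. \<integral>\<^sup>+ \<omega>. U i \<omega> \<partial>palm P \<theta> pp)"
    unfolding SUP_apply using seq(1,4)
    by (intro nn_integral_monotone_convergence_SUP) (simp_all add: measurable_cong_sets[OF sets_palm refl])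
  have e2: "Tf (SUP i. U i) \<omega> = (SUP i. Tf (U i) \<omega>)" for \<omega>
  proof -
    have "incseq (\<lambda>i x. indicator (cbox 0 One) x * U i (\<theta> x \<omega>))"
      using seq(4) by (auto simp: incseq_def le_fun_def intro!: mult_left_mono)
    then show ?thesis unfolding Tf_def SUP_apply SUP_mult_left_ennreal
      by (rule nn_integral_monotone_convergence_SUP) simp
  qed
  have e3: "(\<integral>\<^sup>+ \<omega>. (SUP i. Tf (U i) \<omega>) \<partial>P) = (SUP i. \<integral>\<^sup>+ \<omega>. Tf (U i) \<omega> \<partial>P)"
  proof -
    have "incseq (\<lambda>i. Tf (U i))"
      using seq(4) unfolding Tf_def
      by (auto simp: incseq_def le_fun_def intro!: nn_integral_mono mult_left_mono)
    then show ?thesis using Tf_meas[OF seq(1)] 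
      by (intro nn_integral_monotone_convergence_SUP) auto
  qed
  have "(\<integral>\<^sup>+ \<omega>. Tf (SUP i. U i) \<omega> \<partial>P) = (\<integral>\<^sup>+ \<omega>. (SUP i. Tf (U i) \<omega>) \<partial>P)"
    by (simp only: e2)
  also have "\<dots> = (SUP i. \<integral>\<^sup>+ \<omega>. Tf (U i) \<omega> \<partial>P)" by (rule e3)
  finally have e4: "(\<integral>\<^sup>+ \<omega>. Tf (SUP i. U i) \<omega> \<partial>P) / intensity P pp = (SUP i. (\<integral>\<^sup>+ \<omega>. Tf (U i) \<omega> \<partial>P) / intensity P pp)"
    by (simp add: SUP_divide_ennreal)
  show ?case unfolding e1 e4 using seq(3) by simp
qed

end



lemma cover_cball:
  fixes R :: real
  assumes R: "R \<ge> 0"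
  shows "\<exists>T. finite T \<and> real (card T) \<le> (2*R+3) ^ DIM('a) \<and>
            cball (0::'a::euclidean_space) R \<subseteq> (\<Union>t\<in>T. cbox t (t + One))"
proof -
  define M where "M = \<lceil>R\<rceil>"
  define K where "K = (Basis::'a set) \<rightarrow>\<^sub>E {-M..M}"
  define T where "T = (\<lambda>k. \<Sum>b\<in>Basis. of_int (k b) *\<^sub>R b) ` K"
  have finK: "finite K" unfolding K_def by (intro finite_PiE) auto
  have "card T \<le> card K" unfolding T_def by (rule card_image_le[OF finK])
  also have "card K = (\<Prod>b\<in>(Basis::'a set). card {-M..M})" unfolding K_def by (rule card_PiE) simp
  also have "\<dots> = nat (2*M+1) ^ DIM('a)" by simp
  finally have cT: "real (card T) \<le> real (nat (2*M+1)) ^ DIM('a)"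
    by (metis of_nat_le_iff of_nat_power)
  have "real (nat (2*M+1)) \<le> 2*R+3" unfolding M_def using R by linarith
  then have "real (nat (2*M+1)) ^ DIM('a) \<le> (2*R+3) ^ DIM('a)"
    by (intro power_mono) auto
  with cT have c: "real (card T) \<le> (2*R+3) ^ DIM('a)" by linarith
  have cov: "cball 0 R \<subseteq> (\<Union>t\<in>T. cbox t (t + One))"
  proof
    fix x :: 'a assume x: "x \<in> cball 0 R"
    define k where "k = (\<lambda>b. if b \<in> Basis then \<lfloor>x \<bullet> b\<rfloor> else undefined)"
    have "k \<in> K" unfolding K_def k_def M_def
    proof (intro PiE_I)
      fix b :: 'a assume b: "b \<in> Basis"
      have "\<bar>x \<bullet> b\<bar> \<le> R" using Basis_le_norm[OF b, of x] x by simp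
      then show "(if b \<in> Basis then \<lfloor>x \<bullet> b\<rfloor> else undefined) \<in> {- \<lceil>R\<rceil>..\<lceil>R\<rceil>}"
        using b by (auto simp: abs_le_iff) linarith+
    qed auto
    define t where "t = (\<Sum>b\<in>Basis. of_int (k b) *\<^sub>R b)"
    have tb: "t \<bullet> b = of_int \<lfloor>x \<bullet> b\<rfloor>" if "b \<in> Basis" for b
      unfolding t_def using that by (simp add: inner_sum_left inner_Basis k_def if_distrib cong: if_cong)
    have "x \<in> cbox t (t + One)"
      unfolding mem_box by (auto simp: tb inner_add_left)
    moreover have "t \<in> T" unfolding T_def t_def using \<open>k \<in> K\<close> by blast
    ultimately show "x \<in> (\<Union>t\<in>T. cbox t (t + One))" by blast
  qed
  show ?thesis
    using finK T_def c cov by blast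
qed

lemma ennreal_mult_le_sq_add: "(a::ennreal) * b \<le> a^2 + b^2"
proof (cases "a \<le> b")
  case True
  then have "a * b \<le> b * b" by (intro mult_right_mono) auto
  also have "\<dots> \<le> a^2 + b^2" by (simp add: power2_eq_square)
  finally show ?thesis .
next
  case False
  then have "a * b \<le> a * a" by (intro mult_left_mono) auto
  also have "\<dots> \<le> a^2 + b^2" by (simp add: power2_eq_square)
  finally show ?thesis .
qed

lemma ennreal_le_suminf: "(f i :: ennreal) \<le> suminf f"
  using sum_le_suminf[of f "{i}"] by (simp add: summableI)

lemma exists_dyadic:
  fixes r :: real assumes "r \<ge> 1"
  shows "\<exists>j. 2 ^ j \<le> r \<and> r \<le> 2 ^ (Suc j)"
proof -
  obtain n where n: "r < 2 ^ n" using real_arch_pow[of 2 r] by auto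
  define n0 where "n0 = (LEAST n. r < (2::real) ^ n)"
  have n0: "r < 2 ^ n0" unfolding n0_def by (rule LeastI[of _ n]) (rule n)
  have "n0 \<noteq> 0" using n0 assms by (intro notI) simp
  then obtain j where j: "n0 = Suc j" by (cases n0) auto
  have "\<not> r < 2 ^ j" unfolding n0_def
  proof
    assume "r < 2 ^ j"
    then have "n0 \<le> j" unfolding n0_def by (rule Least_le)
    with j show False by simp
  qed
  then show ?thesis using n0 j by (intro exI[of _ j]) auto
qed


lemma phi_bound_real:
  fixes \<phi> :: "real \<Rightarrow> real" and r d \<epsilon> C0 :: real and k j :: nat
  assumes decay: "\<phi> r \<le> C0 * r powr (- (d + 2 + \<epsilon>))" and C0: "C0 > 0"
    and k: "k \<le> 2" and r1: "2 ^ j \<le> r" and d: "d + \<epsilon> \<ge> 0"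
  shows "\<phi> r * r ^ k \<le> C0 * (2 powr (-(d + \<epsilon>))) ^ j"
proof -
  have r0: "r \<ge> 1" using r1 by (meson one_le_power order_trans one_le_numeral)
  have "r ^ k \<le> r ^ 2" using k r0 by (intro power_increasing) auto
  have "\<phi> r * r ^ k \<le> C0 * r powr (- (d + 2 + \<epsilon>)) * r ^ k"
    using decay r0 by (intro mult_right_mono) auto
  also have "\<dots> \<le> C0 * r powr (- (d + 2 + \<epsilon>)) * r ^ 2"
    using \<open>r ^ k \<le> r ^ 2\<close> C0 r0 by (intro mult_left_mono) auto
  also have "\<dots> = C0 * r powr (- (d + \<epsilon>))"
  proof -
    have "r ^ 2 = r powr 2" using r0 by (simp add: powr_numeral)
    then have "r powr (- (d + 2 + \<epsilon>)) * r ^ 2 = r powr (- (d + 2 + \<epsilon>)) * r powr 2"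
      by simp
    also have "\<dots> = r powr (- (d + 2 + \<epsilon>) + 2)" by (rule powr_add[symmetric])
    also have "\<dots> = r powr (- (d + \<epsilon>))" by (simp add: algebra_simps)
    finally show ?thesis by simp
  qed
  also have "\<dots> \<le> C0 * (2 ^ j) powr (- (d + \<epsilon>))"
    using C0 r1 d by (intro mult_left_mono powr_mono2') auto
  also have "(2 ^ j) powr (- (d + \<epsilon>)) = (2 powr (-(d + \<epsilon>))) ^ j"
    by (simp add: powr_realpow[symmetric] powr_powr powr_power mult.commute)
  finally show ?thesis .
qed

lemma phi_bound:
  fixes \<phi> :: "real \<Rightarrow> real" and x :: "'a::euclidean_space" and k :: nat
  assumes phi_nonneg: "\<And>r. r \<ge> 0 \<Longrightarrow> \<phi> r \<ge> 0"
    and Bb: "\<And>r. r \<in> {0..1} \<Longrightarrow> \<phi> r \<le> B"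
    and decay: "\<And>r. r \<ge> 1 \<Longrightarrow> \<phi> r \<le> C0 * r powr (- (real DIM('a) + 2 + \<epsilon>))"
    and C0: "C0 > 0" and eps: "\<epsilon> > 0" and k: "k \<le> 2"
  shows "ennreal (\<phi> (norm x) * norm x ^ k) \<le>
    (\<Sum>j. ennreal ((max B 0 + C0) * (2 powr (-(real DIM('a) + \<epsilon>))) ^ j) * indicator (cball 0 (2 ^ Suc j)) x)"
proof (cases "norm x \<le> 1")
  case True
  have "\<phi> (norm x) * norm x ^ k \<le> B * 1"
    using True Bb[of "norm x"] phi_nonneg[of "norm x"] k
    by (intro mult_mono power_le_one) auto
  also have "\<dots> \<le> (max B 0 + C0) * (2 powr (-(real DIM('a) + \<epsilon>))) ^ 0" using C0 by simp
  finally have "ennreal (\<phi> (norm x) * norm x ^ k) \<le> ennreal ((max B 0 + C0) * (2 powr (-(real DIM('a) + \<epsilon>))) ^ 0) * indicator (cball 0 (2 ^ Suc 0)) x"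
    using True by (auto intro!: ennreal_leI)
  also have "\<dots> \<le> (\<Sum>j. ennreal ((max B 0 + C0) * (2 powr (-(real DIM('a) + \<epsilon>))) ^ j) * indicator (cball 0 (2 ^ Suc j)) x)"
    by (rule ennreal_le_suminf)
  finally show ?thesis .
next
  case False
  then obtain j where j: "2 ^ j \<le> norm x" "norm x \<le> 2 ^ Suc j" using exists_dyadic[of "norm x"] by auto
  have "\<phi> (norm x) * norm x ^ k \<le> C0 * (2 powr (-(real DIM('a) + \<epsilon>))) ^ j"
    by (rule phi_bound_real[of \<phi> "norm x" C0 "real DIM('a)" \<epsilon>]) (use False decay C0 k j eps in auto)
  also have "\<dots> \<le> (max B 0 + C0) * (2 powr (-(real DIM('a) + \<epsilon>))) ^ j"
    by (intro mult_right_mono) auto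
  finally have "ennreal (\<phi> (norm x) * norm x ^ k) \<le> ennreal ((max B 0 + C0) * (2 powr (-(real DIM('a) + \<epsilon>))) ^ j) * indicator (cball 0 (2 ^ Suc j)) x"
    using j by (auto intro!: ennreal_leI)
  also have "\<dots> \<le> (\<Sum>j. ennreal ((max B 0 + C0) * (2 powr (-(real DIM('a) + \<epsilon>))) ^ j) * indicator (cball 0 (2 ^ Suc j)) x)"
    by (rule ennreal_le_suminf)
  finally show ?thesis .
qed


lemma summable_b:
  fixes \<epsilon> D :: real and n :: nat
  assumes eps: "\<epsilon> > 0" and D: "D \<ge> 0"
  shows "summable (\<lambda>j. D * (2 powr (-(real n + \<epsilon>))) ^ j * (2 * (2 * (2 ^ Suc j + real n) + 3) ^ n))"
proof (rule summable_comparison_test')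
  define q where "q = 2 powr (-(real n + \<epsilon>))"
  have q0: "q > 0" unfolding q_def by simp
  have q1: "q * 2 ^ n = 2 powr (-\<epsilon>)"
    unfolding q_def by (simp add: powr_realpow[symmetric] powr_add[symmetric])
  have "2 powr (-\<epsilon>) < 1" using eps by (simp add: powr_less_one)
  then have "summable (\<lambda>j. (q * 2 ^ n) ^ j)" unfolding q1
    by (intro summable_geometric) simp
  then show "summable (\<lambda>j. (D * 2 * (2 * real n + 7) ^ n) * (q * 2 ^ n) ^ j)"
    by (rule summable_mult)
  fix j :: nat
  have "2 * (2 ^ Suc j + real n) + 3 \<le> 2 ^ j * (2 * real n + 7)"
  proof -
    have j1: "(1::real) \<le> 2 ^ j" by simp
    have "2 * real n + 3 \<le> 2 ^ j * (2 * real n + 3)"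
      using mult_right_mono[OF j1, of "2 * real n + 3"] by simp
    then show ?thesis by (simp add: algebra_simps)
  qed
  then have "(2 * (2 ^ Suc j + real n) + 3) ^ n \<le> (2 ^ j * (2 * real n + 7)) ^ n"
    by (intro power_mono) auto
  also have "\<dots> = (2 ^ n) ^ j * (2 * real n + 7) ^ n"
    by (simp add: power_mult_distrib power_mult[symmetric] mult.commute)
  finally have "D * q ^ j * (2 * (2 * (2 ^ Suc j + real n) + 3) ^ n) \<le> D * q ^ j * (2 * ((2 ^ n) ^ j * (2 * real n + 7) ^ n))"
    using D q0 by (intro mult_left_mono) auto
  also have "\<dots> = (D * 2 * (2 * real n + 7) ^ n) * (q * 2 ^ n) ^ j"
    by (simp add: power_mult_distrib algebra_simps)
  finally show "norm (D * (2 powr (-(real n + \<epsilon>))) ^ j * (2 * (2 * (2 ^ Suc j + real n) + 3) ^ n)) \<le> (D * 2 * (2 * real n + 7) ^ n) * (q * 2 ^ n) ^ j"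
    using D q0 unfolding q_def by simp
qed



locale stat_setup = palm_setup P \<theta> pp
  for P :: "'w measure" and \<theta> :: "'a::euclidean_space \<Rightarrow> 'w \<Rightarrow> 'w" and pp :: "'w \<Rightarrow> 'a set" +
  fixes Os :: "'w set"
  assumes inv: "\<And>x. distr P P (\<theta> x) = P"
    and Os_sets: "Os \<in> sets P" and Os_null: "emeasure P (space P - Os) = 0"
    and Os_shift: "\<And>\<omega> x. \<omega> \<in> Os \<Longrightarrow> pp (\<theta> x \<omega>) = (\<lambda>y. y - x) ` pp \<omega>"
begin

definition cnt :: "'a set \<Rightarrow> 'w \<Rightarrow> ennreal" where
  "cnt A \<omega> = (\<integral>\<^sup>+x. indicator A x \<partial>count_space (pp \<omega>))"

lemma cnt_meas: "A \<in> sets borel \<Longrightarrow> cnt A \<in> borel_measurable P"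
proof -
  assume A: "A \<in> sets borel"
  have "(\<lambda>p. indicator A (snd p) :: ennreal) \<in> borel_measurable (P \<Otimes>\<^sub>M borel)"
    using A by measurable
  from count_int_meas[OF pp_meas this] show ?thesis unfolding cnt_def by simp
qed

lemma cnt_card: "\<omega> \<in> space P \<Longrightarrow> bounded A \<Longrightarrow> cnt A \<omega> = of_nat (card (pp \<omega> \<inter> A))"
proof -
  assume \<omega>: "\<omega> \<in> space P" and A: "bounded A"
  have fin: "finite (pp \<omega> \<inter> A)" by (rule lf_finite[OF pp_lf[OF pp_meas \<omega>] A])
  have "cnt A \<omega> = (\<integral>\<^sup>+x. indicator A x * indicator (pp \<omega>) x \<partial>count_space UNIV)"
    unfolding cnt_def by (rule nn_integral_count_space_indicator) simp
  also have "\<dots> = (\<integral>\<^sup>+x. indicator (pp \<omega> \<inter> A) x \<partial>count_space UNIV)"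
    by (intro nn_integral_cong) (auto simp: indicator_def)
  also have "\<dots> = of_nat (card (pp \<omega> \<inter> A))" using fin by simp
  finally show ?thesis .
qed

lemma AE_Os: "AE \<omega> in P. \<omega> \<in> Os"
  by (rule AE_I'[of "space P - Os"]) (use Os_sets Os_null in auto)

lemma theta_meas: "\<theta> t \<in> measurable P P"
proof -
  have "(\<lambda>\<omega>. (\<omega>, t)) \<in> measurable P (P \<Otimes>\<^sub>M borel)" by measurable
  from measurable_compose[OF this th_meas] show ?thesis by simp
qed

lemma shift_box: "y - t \<in> cbox 0 One \<longleftrightarrow> (y::'a) \<in> cbox t (t + One)"
  by (auto simp: mem_box inner_diff_left inner_add_left)

lemma card_shift:
  assumes "\<omega> \<in> Os"
  shows "card (pp (\<theta> t \<omega>) \<inter> cbox 0 One) = card (pp \<omega> \<inter> cbox t (t + One))"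
proof -
  have "pp (\<theta> t \<omega>) \<inter> cbox 0 One = (\<lambda>y. y - t) ` (pp \<omega> \<inter> cbox t (t + One))"
    unfolding Os_shift[OF assms] using shift_box by auto
  moreover have "inj_on (\<lambda>y. y - t) (pp \<omega> \<inter> cbox t (t + One))" by (auto simp: inj_on_def)
  ultimately show ?thesis by (simp add: card_image)
qed

lemma stat: "(\<integral>\<^sup>+\<omega>. (cnt (cbox t (t + One)) \<omega>)^2 \<partial>P) = second_moment P pp"
proof -
  let ?g = "\<lambda>\<omega>. (of_nat (card (pp \<omega> \<inter> cbox 0 One)) :: ennreal) ^ 2"
  have gm: "?g \<in> borel_measurable P"
    by (intro borel_measurable_power_ennreal card_cnt_meas[OF pp_meas]) auto
  have "second_moment P pp = (\<integral>\<^sup>+\<omega>. ?g \<omega> \<partial>distr P P (\<theta> t))"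
    unfolding second_moment_def inv ..
  also have "\<dots> = (\<integral>\<^sup>+\<omega>. ?g (\<theta> t \<omega>) \<partial>P)"
    by (rule nn_integral_distr[OF theta_meas]) (simp add: inv gm)
  also have "\<dots> = (\<integral>\<^sup>+\<omega>. (cnt (cbox t (t + One)) \<omega>)^2 \<partial>P)"
  proof (rule nn_integral_cong_AE)
    show "AE \<omega> in P. ?g (\<theta> t \<omega>) = (cnt (cbox t (t + One)) \<omega>)^2"
      using AE_Os
    proof (rule AE_mp, intro AE_I2 impI)
      fix \<omega> assume "\<omega> \<in> space P" "\<omega> \<in> Os"
      then show "?g (\<theta> t \<omega>) = (cnt (cbox t (t + One)) \<omega>)^2"
        by (simp add: card_shift cnt_card)
    qed
  qed
  finally show ?thesis by simp
qed

lemma pair_bound: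
  assumes R: "R \<ge> 0"
  shows "(\<integral>\<^sup>+\<omega>. cnt (cbox 0 One) \<omega> * cnt (cball 0 R) \<omega> \<partial>P)
     \<le> ennreal (2 * (2*R+3) ^ DIM('a)) * second_moment P pp"
proof -
  obtain T where T: "finite T" "real (card T) \<le> (2*R+3) ^ DIM('a)"
    "cball (0::'a) R \<subseteq> (\<Union>t\<in>T. cbox t (t + One))"
    using cover_cball[OF R] by blast
  have pw: "cnt (cbox 0 One) \<omega> * cnt (cball 0 R) \<omega> \<le>
      (\<Sum>t\<in>T. (cnt (cbox 0 One) \<omega>)^2 + (cnt (cbox t (t + One)) \<omega>)^2)" for \<omega>
  proof -
    have "cnt (cball 0 R) \<omega> \<le> (\<integral>\<^sup>+x. (\<Sum>t\<in>T. indicator (cbox t (t + One)) x) \<partial>count_space (pp \<omega>))"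
      unfolding cnt_def
    proof (intro nn_integral_mono)
      fix x
      show "indicator (cball 0 R) x \<le> (\<Sum>t\<in>T. indicator (cbox t (t + One)) x :: ennreal)"
      proof (cases "x \<in> cball 0 R")
        case True
        then obtain t where t: "t \<in> T" "x \<in> cbox t (t + One)" using T(3) by blast
        have "indicator (cbox t (t + One)) x \<le> (\<Sum>t\<in>T. indicator (cbox t (t + One)) x :: ennreal)"
          by (rule member_le_sum) (use t T(1) in auto)
        then show ?thesis using True t by simp
      qed simp
    qed
    also have "\<dots> = (\<Sum>t\<in>T. cnt (cbox t (t + One)) \<omega>)"
      unfolding cnt_def by (rule nn_integral_sum) simp
    finally have "cnt (cbox 0 One) \<omega> * cnt (cball 0 R) \<omega> \<le> cnt (cbox 0 One) \<omega> * (\<Sum>t\<in>T. cnt (cbox t (t + One)) \<omega>)"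
      by (rule mult_left_mono) simp
    also have "\<dots> = (\<Sum>t\<in>T. cnt (cbox 0 One) \<omega> * cnt (cbox t (t + One)) \<omega>)"
      by (rule sum_distrib_left)
    also have "\<dots> \<le> (\<Sum>t\<in>T. (cnt (cbox 0 One) \<omega>)^2 + (cnt (cbox t (t + One)) \<omega>)^2)"
      by (intro sum_mono ennreal_mult_le_sq_add)
    finally show ?thesis .
  qed
  have "(\<integral>\<^sup>+\<omega>. cnt (cbox 0 One) \<omega> * cnt (cball 0 R) \<omega> \<partial>P)
      \<le> (\<integral>\<^sup>+\<omega>. (\<Sum>t\<in>T. (cnt (cbox 0 One) \<omega>)^2 + (cnt (cbox t (t + One)) \<omega>)^2) \<partial>P)"
    by (intro nn_integral_mono pw)
  also have "\<dots> = (\<Sum>t\<in>T. \<integral>\<^sup>+\<omega>. (cnt (cbox 0 One) \<omega>)^2 + (cnt (cbox t (t + One)) \<omega>)^2 \<partial>P)"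
    by (rule nn_integral_sum) (intro borel_measurable_add borel_measurable_power_ennreal cnt_meas; simp)
  also have "\<dots> = (\<Sum>t\<in>T. 2 * second_moment P pp)"
  proof (rule sum.cong[OF refl])
    fix t
    have "(\<integral>\<^sup>+\<omega>. (cnt (cbox 0 One) \<omega>)^2 + (cnt (cbox t (t + One)) \<omega>)^2 \<partial>P)
       = (\<integral>\<^sup>+\<omega>. (cnt (cbox 0 (0 + One)) \<omega>)^2 \<partial>P) + (\<integral>\<^sup>+\<omega>. (cnt (cbox t (t + One)) \<omega>)^2 \<partial>P)"
      by (simp, rule nn_integral_add) (intro borel_measurable_power_ennreal cnt_meas; simp)+
    also have "\<dots> = 2 * second_moment P pp" unfolding stat by (simp add: mult_2)
    finally show "(\<integral>\<^sup>+\<omega>. (cnt (cbox 0 One) \<omega>)^2 + (cnt (cbox t (t + One)) \<omega>)^2 \<partial>P) = 2 * second_moment P pp" .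
  qed
  also have "\<dots> = of_nat (card T) * (2 * second_moment P pp)" by simp
  also have "\<dots> \<le> ennreal ((2*R+3) ^ DIM('a)) * (2 * second_moment P pp)"
    by (intro mult_right_mono) (use T(2) in \<open>simp_all add: ennreal_of_nat_eq_real_of_nat ennreal_leI\<close>)
  also have "\<dots> = ennreal (2 * (2*R+3) ^ DIM('a)) * second_moment P pp"
    using R by (simp add: ennreal_mult mult_ac)
  finally show ?thesis .
qed

lemma norm_unit_box: "y \<in> cbox (0::'a) One \<Longrightarrow> norm y \<le> real DIM('a)"
proof -
  assume y: "y \<in> cbox (0::'a) One"
  have "norm y \<le> (\<Sum>b\<in>Basis. \<bar>y \<bullet> b\<bar>)" by (rule norm_le_l1)
  also have "\<dots> \<le> (\<Sum>b\<in>(Basis::'a set). 1)"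
    using y by (intro sum_mono) (auto simp: mem_box)
  finally show ?thesis by simp
qed

lemma H_bound:
  fixes a :: "nat \<Rightarrow> real"
  assumes a: "\<And>j. a j \<ge> 0"
  defines "\<Phi> \<equiv> \<lambda>x. (\<Sum>j. ennreal (a j) * indicator (cball 0 (2 ^ Suc j)) x)"
  defines "H \<equiv> \<lambda>\<omega>. \<integral>\<^sup>+x. \<Phi> x \<partial>count_space (pp \<omega>)"
  shows "H \<in> borel_measurable P"
    and "(\<integral>\<^sup>+\<omega>. H \<omega> \<partial>palm P \<theta> pp) \<le>
       (\<Sum>j. ennreal (a j) * (ennreal (2 * (2 * (2 ^ Suc j + real DIM('a)) + 3) ^ DIM('a)) * second_moment P pp)) / intensity P pp"
proof -
  define R where "R j = 2 ^ Suc j + real DIM('a)" for j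
  define G where "G \<omega> = (\<Sum>j. ennreal (a j) * cnt (cball 0 (R j)) \<omega>)" for \<omega>
  have cm: "(\<lambda>x. indicator (cball 0 (2 ^ Suc j)) x :: ennreal) \<in> borel_measurable borel" for j :: nat
    by (intro borel_measurable_indicator borel_closed) simp
  have \<Phi>m: "\<Phi> \<in> borel_measurable borel" unfolding \<Phi>_def
    by (intro borel_measurable_suminf_order borel_measurable_times_ennreal borel_measurable_const cm)
  have "(\<lambda>p. \<Phi> (snd p)) \<in> borel_measurable (P \<Otimes>\<^sub>M borel)" using \<Phi>m by measurable
  from count_int_meas[OF pp_meas this] show Hm: "H \<in> borel_measurable P" unfolding H_def by simp
  have G_meas: "(\<lambda>\<omega>. cnt (cbox 0 One) \<omega> * (ennreal (a j) * cnt (cball 0 (R j)) \<omega>)) \<in> borel_measurable P" for j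
    by (intro borel_measurable_times_ennreal cnt_meas borel_measurable_const) auto
  have HG: "H (\<theta> y \<omega>) \<le> G \<omega>" if \<omega>: "\<omega> \<in> Os" and y: "y \<in> cbox 0 One" for \<omega> y
  proof -
    have "H (\<theta> y \<omega>) = (\<integral>\<^sup>+x. \<Phi> x \<partial>count_space ((\<lambda>z. z - y) ` pp \<omega>))"
      unfolding H_def Os_shift[OF \<omega>] ..
    also have "\<dots> = (\<integral>\<^sup>+z. \<Phi> (z - y) \<partial>count_space (pp \<omega>))"
      by (rule nn_integral_bij_count_space[symmetric]) (auto simp: bij_betw_def inj_on_def)
    also have "\<dots> \<le> (\<integral>\<^sup>+z. (\<Sum>j. ennreal (a j) * indicator (cball 0 (R j)) z) \<partial>count_space (pp \<omega>))"
    proof (intro nn_integral_mono)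
      fix z :: 'a
      have ny: "norm y \<le> real DIM('a)" by (rule norm_unit_box[OF y])
      show "\<Phi> (z - y) \<le> (\<Sum>j. ennreal (a j) * indicator (cball 0 (R j)) z)"
        unfolding \<Phi>_def
      proof (intro suminf_le summableI mult_left_mono)
        fix j
        show "indicator (cball 0 (2 ^ Suc j)) (z - y) \<le> (indicator (cball 0 (R j)) z :: ennreal)"
        proof (cases "z - y \<in> cball 0 (2 ^ Suc j)")
          case True
          then have "norm (z - y) \<le> 2 ^ Suc j" by simp
          moreover have "norm z \<le> norm (z - y) + norm y" using norm_triangle_ineq[of "z - y" y] by simp
          ultimately have "z \<in> cball 0 (R j)" using ny unfolding R_def by simp
          then show ?thesis using True by simp
        qed simp
      qed simp
    qed
    also have "\<dots> = G \<omega>"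
      unfolding G_def cnt_def
      by (subst nn_integral_suminf) (simp_all add: nn_integral_cmult)
    finally show ?thesis .
  qed
  have TfH: "Tf H \<omega> \<le> cnt (cbox 0 One) \<omega> * G \<omega>" if \<omega>: "\<omega> \<in> Os" for \<omega>
  proof -
    have "Tf H \<omega> \<le> (\<integral>\<^sup>+y. indicator (cbox 0 One) y * G \<omega> \<partial>count_space (pp \<omega>))"
      unfolding Tf_def
    proof (intro nn_integral_mono)
      fix y
      show "indicator (cbox 0 One) y * H (\<theta> y \<omega>) \<le> indicator (cbox 0 One) y * G \<omega>"
        by (cases "y \<in> cbox 0 One") (simp_all add: HG[OF \<omega>])
    qed
    also have "\<dots> = cnt (cbox 0 One) \<omega> * G \<omega>"
      unfolding cnt_def by (rule nn_integral_multc) simp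
    finally show ?thesis .
  qed
  have "(\<integral>\<^sup>+\<omega>. Tf H \<omega> \<partial>P) \<le> (\<integral>\<^sup>+\<omega>. cnt (cbox 0 One) \<omega> * G \<omega> \<partial>P)"
    using AE_Os by (intro nn_integral_mono_AE) (rule AE_mp, auto intro!: AE_I2 TfH)
  also have "\<dots> = (\<integral>\<^sup>+\<omega>. (\<Sum>j. cnt (cbox 0 One) \<omega> * (ennreal (a j) * cnt (cball 0 (R j)) \<omega>)) \<partial>P)"
    unfolding G_def by simp
  also have "\<dots> = (\<Sum>j. \<integral>\<^sup>+\<omega>. cnt (cbox 0 One) \<omega> * (ennreal (a j) * cnt (cball 0 (R j)) \<omega>) \<partial>P)"
    by (rule nn_integral_suminf) (rule G_meas)
  also have "\<dots> \<le> (\<Sum>j. ennreal (a j) * (ennreal (2 * (2 * R j + 3) ^ DIM('a)) * second_moment P pp))"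
  proof (intro suminf_le summableI)
    fix j
    have "(\<integral>\<^sup>+\<omega>. cnt (cbox 0 One) \<omega> * (ennreal (a j) * cnt (cball 0 (R j)) \<omega>) \<partial>P)
       = ennreal (a j) * (\<integral>\<^sup>+\<omega>. cnt (cbox 0 One) \<omega> * cnt (cball 0 (R j)) \<omega> \<partial>P)"
      by (subst nn_integral_cmult[symmetric]) (auto intro!: borel_measurable_times_ennreal cnt_meas simp: mult_ac)
    also have "\<dots> \<le> ennreal (a j) * (ennreal (2 * (2 * R j + 3) ^ DIM('a)) * second_moment P pp)"
      by (intro mult_left_mono pair_bound) (auto simp: R_def)
    finally show "(\<integral>\<^sup>+\<omega>. cnt (cbox 0 One) \<omega> * (ennreal (a j) * cnt (cball 0 (R j)) \<omega>) \<partial>P)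
       \<le> ennreal (a j) * (ennreal (2 * (2 * R j + 3) ^ DIM('a)) * second_moment P pp)" .
  qed
  finally have "(\<integral>\<^sup>+\<omega>. Tf H \<omega> \<partial>P) / intensity P pp \<le>
     (\<Sum>j. ennreal (a j) * (ennreal (2 * (2 * R j + 3) ^ DIM('a)) * second_moment P pp)) / intensity P pp"
    by (rule divide_right_mono_ennreal)
  then show "(\<integral>\<^sup>+\<omega>. H \<omega> \<partial>palm P \<theta> pp) \<le>
       (\<Sum>j. ennreal (a j) * (ennreal (2 * (2 * (2 ^ Suc j + real DIM('a)) + 3) ^ DIM('a)) * second_moment P pp)) / intensity P pp"
    unfolding palm_int[OF Hm] R_def .
qed

end



theorem proposition4p11:
  fixes P :: "'w measure"
    and \<theta> :: "'a::euclidean_space \<Rightarrow> 'w \<Rightarrow> 'w"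
    and pp :: "'w \<Rightarrow> 'a set"
    and c :: "'w \<Rightarrow> 'a \<Rightarrow> 'a \<Rightarrow> real"
    and \<phi> :: "real \<Rightarrow> real"
    and C0 \<epsilon> :: real
  assumes prob: "prob_space P"
    and action: "measurable_action P \<theta>"
    and pp_meas: "pp \<in> measurable P Nspace"
    and c_meas: "(\<lambda>(\<omega>, x, y). c \<omega> x y) \<in> borel_measurable (P \<Otimes>\<^sub>M borel \<Otimes>\<^sub>M borel)"
    and c_nonneg: "\<And>\<omega> x y. c \<omega> x y \<ge> 0"
    and c_sym: "\<And>\<omega> x y. c \<omega> x y = c \<omega> y x"
    and c_diag: "\<And>\<omega> x. c \<omega> x x = 0"
    and c_dt: "\<And>\<omega> x y. \<not> dt_adj (pp \<omega>) x y \<Longrightarrow> c \<omega> x y = 0"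
    and A1_inv: "\<And>x. distr P P (\<theta> x) = P"
    and A1_nonempty: "emeasure P {\<omega> \<in> space P. pp \<omega> = {}} = 0"
    and A2: "0 < intensity P pp" "intensity P pp < \<infinity>"
    and A3: "\<exists>\<Omega>s \<in> sets P. emeasure P (space P - \<Omega>s) = 0 \<and>
               (\<forall>x. \<forall>\<omega>\<in>\<Omega>s. \<theta> x \<omega> \<in> \<Omega>s) \<and>
               (\<forall>\<omega>\<in>\<Omega>s. \<forall>x. pp (\<theta> x \<omega>) = (\<lambda>y. y - x) ` pp \<omega> \<and>
                   (\<forall>y z. dt_adj (pp \<omega>) y z \<longrightarrow> c (\<theta> x \<omega>) (y - x) (z - x) = c \<omega> y z))"
    and phi_meas: "\<phi> \<in> borel_measurable borel"
    and phi_nonneg: "\<And>r. r \<ge> 0 \<Longrightarrow> \<phi> r \<ge> 0"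
    and phi_locbdd: "\<And>R. \<exists>B. \<forall>r\<in>{0..R}. \<phi> r \<le> B"
    and C0_pos: "C0 > 0" and eps_pos: "\<epsilon> > 0"
    and phi_decay: "\<And>r. r \<ge> 1 \<Longrightarrow> \<phi> r \<le> C0 * r powr (- (real DIM('a) + 2 + \<epsilon>))"
    and cond: "\<exists>g. cond_exp_neighbours (palm P \<theta> pp) pp c g \<and>
                 (AE \<omega> in palm P \<theta> pp. \<forall>x \<in> pp \<omega>. dt_adj (pp \<omega>) 0 x \<longrightarrow>
                     g (pp \<omega>, x) \<le> ennreal (\<phi> (norm x)))"
    and rho2: "second_moment P pp < \<infinity>"
  shows "lam c pp 0 \<in> borel_measurable (palm P \<theta> pp) \<and>
           (\<integral>\<^sup>+ \<omega>. lam c pp 0 \<omega> \<partial>palm P \<theta> pp) < \<infinity> \<and>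
         lam c pp 2 \<in> borel_measurable (palm P \<theta> pp) \<and>
           (\<integral>\<^sup>+ \<omega>. lam c pp 2 \<omega> \<partial>palm P \<theta> pp) < \<infinity>"
proof -
  obtain Os where Os: "Os \<in> sets P" "emeasure P (space P - Os) = 0"
    "\<forall>x. \<forall>\<omega>\<in>Os. \<theta> x \<omega> \<in> Os"
    "\<forall>\<omega>\<in>Os. \<forall>x. pp (\<theta> x \<omega>) = (\<lambda>y. y - x) ` pp \<omega> \<and>
        (\<forall>y z. dt_adj (pp \<omega>) y z \<longrightarrow> c (\<theta> x \<omega>) (y - x) (z - x) = c \<omega> y z)"
    using A3 by blast
  interpret stat_setup P \<theta> pp Os
    by unfold_locales (use action pp_meas A2 A1_inv Os in auto)
  obtain g where gc: "cond_exp_neighbours (palm P \<theta> pp) pp c g"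
    and gAE: "AE \<omega> in palm P \<theta> pp. \<forall>x \<in> pp \<omega>. dt_adj (pp \<omega>) 0 x \<longrightarrow> g (pp \<omega>, x) \<le> ennreal (\<phi> (norm x))"
    using cond by blast
  obtain B where B: "\<forall>r\<in>{0..1}. \<phi> r \<le> B" using phi_locbdd by blast
  define a where "a j = (max B 0 + C0) * (2 powr (-(real DIM('a) + \<epsilon>))) ^ j" for j
  have a0: "a j \<ge> 0" for j unfolding a_def using C0_pos by simp
  define \<Phi> where "\<Phi> = (\<lambda>x::'a. (\<Sum>j. ennreal (a j) * indicator (cball 0 (2 ^ Suc j)) x))"
  define H where "H = (\<lambda>\<omega>. \<integral>\<^sup>+x. \<Phi> x \<partial>count_space (pp \<omega>))"
  have Hb: "(\<integral>\<^sup>+\<omega>. H \<omega> \<partial>palm P \<theta> pp) \<le>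
       (\<Sum>j. ennreal (a j) * (ennreal (2 * (2 * (2 ^ Suc j + real DIM('a)) + 3) ^ DIM('a)) * second_moment P pp)) / intensity P pp"
    unfolding H_def \<Phi>_def by (rule H_bound(2)) (rule a0)
  have fin: "(\<Sum>j. ennreal (a j) * (ennreal (2 * (2 * (2 ^ Suc j + real DIM('a)) + 3) ^ DIM('a)) * second_moment P pp)) / intensity P pp < \<infinity>"
  proof -
    have "(\<Sum>j. ennreal (a j) * (ennreal (2 * (2 * (2 ^ Suc j + real DIM('a)) + 3) ^ DIM('a)) * second_moment P pp))
       = (\<Sum>j. ennreal (a j * (2 * (2 * (2 ^ Suc j + real DIM('a)) + 3) ^ DIM('a)))) * second_moment P pp"
    proof -
      have "(\<Sum>j. ennreal (a j) * (ennreal (2 * (2 * (2 ^ Suc j + real DIM('a)) + 3) ^ DIM('a)) * second_moment P pp))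
        = (\<Sum>j. ennreal (a j * (2 * (2 * (2 ^ Suc j + real DIM('a)) + 3) ^ DIM('a))) * second_moment P pp)"
      proof (rule suminf_cong)
        fix j
        have "ennreal (a j * (2 * (2 * (2 ^ Suc j + real DIM('a)) + 3) ^ DIM('a)))
            = ennreal (a j) * ennreal (2 * (2 * (2 ^ Suc j + real DIM('a)) + 3) ^ DIM('a))"
          by (rule ennreal_mult[OF a0]) simp
        then show "ennreal (a j) * (ennreal (2 * (2 * (2 ^ Suc j + real DIM('a)) + 3) ^ DIM('a)) * second_moment P pp)
          = ennreal (a j * (2 * (2 * (2 ^ Suc j + real DIM('a)) + 3) ^ DIM('a))) * second_moment P pp"
          by (simp only: mult.assoc)
      qed
      then show ?thesis by (simp only: ennreal_suminf_multc)
    qed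
    moreover have "(\<Sum>j. ennreal (a j * (2 * (2 * (2 ^ Suc j + real DIM('a)) + 3) ^ DIM('a)))) \<noteq> \<top>"
    proof (rule ennreal_suminf_neq_top)
      show "summable (\<lambda>j. a j * (2 * (2 * (2 ^ Suc j + real DIM('a)) + 3) ^ DIM('a)))"
        unfolding a_def using summable_b[OF eps_pos, of "max B 0 + C0" "DIM('a)"] C0_pos
        by (simp add: mult.assoc)
      show "0 \<le> a j * (2 * (2 * (2 ^ Suc j + real DIM('a)) + 3) ^ DIM('a))" for j
        using a0[of j] by simp
    qed
    ultimately have "(\<Sum>j. ennreal (a j) * (ennreal (2 * (2 * (2 ^ Suc j + real DIM('a)) + 3) ^ DIM('a)) * second_moment P pp)) < \<top>"
      using rho2 by (simp add: ennreal_mult_less_top top.not_eq_extremum)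
    then show ?thesis using A2(1) by (auto simp: ennreal_divide_eq_top_iff less_top[symmetric])
  qed
  have main: "lam c pp k \<in> borel_measurable (palm P \<theta> pp) \<and> (\<integral>\<^sup>+ \<omega>. lam c pp k \<omega> \<partial>palm P \<theta> pp) < \<infinity>"
    if k: "k \<le> 2" for k
  proof
    have lam_eq: "lam c pp k \<omega> = (\<integral>\<^sup>+x. ennreal (c \<omega> 0 x * norm x ^ k) \<partial>count_space (pp \<omega>))" for \<omega>
    proof -
      have "lam c pp k \<omega> = (\<integral>\<^sup>+x. ennreal (c \<omega> 0 x * norm x ^ k) * indicator {x \<in> pp \<omega>. dt_adj (pp \<omega>) 0 x} x \<partial>count_space UNIV)"
        unfolding lam_def by (rule nn_integral_count_space_indicator) simp
      also have "\<dots> = (\<integral>\<^sup>+x. ennreal (c \<omega> 0 x * norm x ^ k) * indicator (pp \<omega>) x \<partial>count_space UNIV)"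
        by (intro nn_integral_cong) (auto simp: indicator_def c_dt)
      also have "\<dots> = (\<integral>\<^sup>+x. ennreal (c \<omega> 0 x * norm x ^ k) \<partial>count_space (pp \<omega>))"
        by (rule nn_integral_count_space_indicator[symmetric]) simp
      finally show ?thesis .
    qed
    have "(\<lambda>p. (fst p, 0::'a, snd p)) \<in> measurable (P \<Otimes>\<^sub>M borel) (P \<Otimes>\<^sub>M (borel \<Otimes>\<^sub>M borel))"
      by measurable
    from measurable_compose[OF this c_meas]
    have cm: "(\<lambda>p. c (fst p) 0 (snd p)) \<in> borel_measurable (P \<Otimes>\<^sub>M borel)" by simp
    have "(\<lambda>p. ennreal (c (fst p) 0 (snd p) * norm (snd p) ^ k)) \<in> borel_measurable (P \<Otimes>\<^sub>M borel)"
      using cm by measurable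
    from count_int_meas[OF pp_meas this]
    have "lam c pp k \<in> borel_measurable P" unfolding lam_eq by simp
    then show "lam c pp k \<in> borel_measurable (palm P \<theta> pp)"
      by (simp add: measurable_cong_sets[OF sets_palm refl])
    define h where "h = (\<lambda>p::'a set \<times> 'a. ennreal (norm (snd p) ^ k))"
    have hm: "h \<in> borel_measurable (Nspace \<Otimes>\<^sub>M borel)" unfolding h_def by measurable
    have "(\<integral>\<^sup>+ \<omega>. lam c pp k \<omega> \<partial>palm P \<theta> pp) =
       (\<integral>\<^sup>+ \<omega>. (\<integral>\<^sup>+ x. ennreal (c \<omega> 0 x) * h (pp \<omega>, x) \<partial>count_space {x \<in> pp \<omega>. dt_adj (pp \<omega>) 0 x}) \<partial>palm P \<theta> pp)"
      unfolding lam_def h_def by (simp add: ennreal_mult c_nonneg)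
    also have "\<dots> = (\<integral>\<^sup>+ \<omega>. (\<integral>\<^sup>+ x. g (pp \<omega>, x) * h (pp \<omega>, x) \<partial>count_space {x \<in> pp \<omega>. dt_adj (pp \<omega>) 0 x}) \<partial>palm P \<theta> pp)"
      using gc hm unfolding cond_exp_neighbours_def by blast
    also have "\<dots> \<le> (\<integral>\<^sup>+ \<omega>. H \<omega> \<partial>palm P \<theta> pp)"
    proof (rule nn_integral_mono_AE)
      show "AE \<omega> in palm P \<theta> pp. (\<integral>\<^sup>+ x. g (pp \<omega>, x) * h (pp \<omega>, x) \<partial>count_space {x \<in> pp \<omega>. dt_adj (pp \<omega>) 0 x}) \<le> H \<omega>"
        using gAE
      proof (rule AE_mp, intro AE_I2 impI)
        fix \<omega> assume gb: "\<forall>x \<in> pp \<omega>. dt_adj (pp \<omega>) 0 x \<longrightarrow> g (pp \<omega>, x) \<le> ennreal (\<phi> (norm x))"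
        have "(\<integral>\<^sup>+ x. g (pp \<omega>, x) * h (pp \<omega>, x) \<partial>count_space {x \<in> pp \<omega>. dt_adj (pp \<omega>) 0 x})
            \<le> (\<integral>\<^sup>+ x. \<Phi> x \<partial>count_space {x \<in> pp \<omega>. dt_adj (pp \<omega>) 0 x})"
        proof (rule nn_integral_mono)
          fix x assume "x \<in> space (count_space {x \<in> pp \<omega>. dt_adj (pp \<omega>) 0 x})"
          then have x: "x \<in> pp \<omega>" "dt_adj (pp \<omega>) 0 x" by auto
          have "g (pp \<omega>, x) * h (pp \<omega>, x) \<le> ennreal (\<phi> (norm x)) * ennreal (norm x ^ k)"
            unfolding h_def using gb x by (simp add: mult_right_mono)
          also have "\<dots> = ennreal (\<phi> (norm x) * norm x ^ k)"
            using phi_nonneg[of "norm x"] by (simp add: ennreal_mult)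
          also have "\<dots> \<le> \<Phi> x"
            unfolding \<Phi>_def a_def
            by (rule phi_bound[OF _ _ phi_decay C0_pos eps_pos k]) (use phi_nonneg B in auto)
          finally show "g (pp \<omega>, x) * h (pp \<omega>, x) \<le> \<Phi> x" .
        qed
        also have "\<dots> \<le> H \<omega>"
          unfolding H_def
          by (subst (1 2) nn_integral_count_space_indicator) (auto intro!: nn_integral_mono mult_left_mono simp: indicator_def)
        finally show "(\<integral>\<^sup>+ x. g (pp \<omega>, x) * h (pp \<omega>, x) \<partial>count_space {x \<in> pp \<omega>. dt_adj (pp \<omega>) 0 x}) \<le> H \<omega>" .
      qed
    qed
    also have "\<dots> < \<infinity>" using Hb fin by (rule le_less_trans)
    finally show "(\<integral>\<^sup>+ \<omega>. lam c pp k \<omega> \<partial>palm P \<theta> pp) < \<infinity>" .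
  qed
  show ?thesis using main[of 0] main[of 2] by simp
qed

end
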